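(* Let $(M,(I,O))$ be an oriented map with root $h_0$ and backward function $\beta$. Then $(M,(I,O))$ is left-connected if and only if for every half-edge $h$ there exists an integer $q>0$ such that $\beta^q(h)=h_0$.
   Context: A map is $M=(H,\sigma,\alpha)$ with $H$ finite, $\alpha$ a fixed-point-free involution, $\sigma$ a permutation, $\langle\sigma,\alpha\rangle$ transitive, with root $h_0\in H$; $\phi=\sigma\alpha$ (i.e. $\phi(h)=\sigma(\alpha(h))$) is the face-permutation. An orientation is a partition $H=I\uplus O$ with $\alpha(I)=O$. The backward function is $\beta(h)=\sigma(h)$ if $h\in O$ and $\beta(h)=\phi(h)$ if $h\in I$. A left-path is a sequence $h_1,\dots,h_k$ of half-edges in $I$ such that for each $j=1,\dots,k$ there is an integer $q_j>0$ with $h_{j-1}=\sigma^{q_j}(\alpha(h_j))$ and $\sigma^p(\alpha(h_j))\in O$ for all $p=0,\dots,q_j-1$. The oriented map is left-connected if every half-edge in $I$ is the last element of some left-path. *)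

theory Defs
  imports "HOL-Combinatorics.Permutations"
begin

definition is_map :: "'a set \<Rightarrow> ('a \<Rightarrow> 'a) \<Rightarrow> ('a \<Rightarrow> 'a) \<Rightarrow> 'a \<Rightarrow> bool" where
  "is_map H \<sigma> \<alpha> h0 \<longleftrightarrow>
     finite H \<and> h0 \<in> H \<and> \<sigma> permutes H \<and> \<alpha> permutes H \<and>
     (\<forall>h\<in>H. \<alpha> (\<alpha> h) = h \<and> \<alpha> h \<noteq> h) \<and>
     (\<forall>x\<in>H. \<forall>y\<in>H. (x, y) \<in> ({(u, \<sigma> u) | u. u \<in> H} \<union> {(u, \<alpha> u) | u. u \<in> H})\<^sup>*)"

definition face_perm :: "('a \<Rightarrow> 'a) \<Rightarrow> ('a \<Rightarrow> 'a) \<Rightarrow> 'a \<Rightarrow> 'a" where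
  "face_perm \<sigma> \<alpha> = \<sigma> \<circ> \<alpha>"

definition is_orientation :: "'a set \<Rightarrow> ('a \<Rightarrow> 'a) \<Rightarrow> 'a set \<Rightarrow> 'a set \<Rightarrow> bool" where
  "is_orientation H \<alpha> Iset Oset \<longleftrightarrow> Iset \<union> Oset = H \<and> Iset \<inter> Oset = {} \<and> \<alpha> ` Iset = Oset"

definition backward :: "('a \<Rightarrow> 'a) \<Rightarrow> ('a \<Rightarrow> 'a) \<Rightarrow> 'a set \<Rightarrow> 'a \<Rightarrow> 'a" where
  "backward \<sigma> \<alpha> Oset h = (if h \<in> Oset then \<sigma> h else face_perm \<sigma> \<alpha> h)"

definition left_path :: "('a \<Rightarrow> 'a) \<Rightarrow> ('a \<Rightarrow> 'a) \<Rightarrow> 'a set \<Rightarrow> 'a set \<Rightarrow> 'a \<Rightarrow> 'a list \<Rightarrow> bool" where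
  "left_path \<sigma> \<alpha> Iset Oset h0 hs \<longleftrightarrow>
     set hs \<subseteq> Iset \<and>
     (\<forall>j < length hs.
        (let prev = (if j = 0 then h0 else hs ! (j - 1)) in
         \<exists>q > 0. prev = (\<sigma> ^^ q) (\<alpha> (hs ! j)) \<and>
                 (\<forall>p < q. (\<sigma> ^^ p) (\<alpha> (hs ! j)) \<in> Oset)))"

definition left_connected :: "('a \<Rightarrow> 'a) \<Rightarrow> ('a \<Rightarrow> 'a) \<Rightarrow> 'a set \<Rightarrow> 'a set \<Rightarrow> 'a \<Rightarrow> bool" where
  "left_connected \<sigma> \<alpha> Iset Oset h0 \<longleftrightarrow>
     (\<forall>h \<in> Iset. \<exists>hs. hs \<noteq> [] \<and> left_path \<sigma> \<alpha> Iset Oset h0 hs \<and> last hs = h)"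

end

theory Submission
  imports Defs
begin

definition seg :: "('a \<Rightarrow> 'a) \<Rightarrow> ('a \<Rightarrow> 'a) \<Rightarrow> 'a set \<Rightarrow> 'a \<Rightarrow> 'a \<Rightarrow> bool" where
  "seg \<sigma> \<alpha> Oset g x \<longleftrightarrow> (\<exists>q > 0. g = (\<sigma> ^^ q) (\<alpha> x) \<and> (\<forall>p < q. (\<sigma> ^^ p) (\<alpha> x) \<in> Oset))"

lemma beta_O: "h \<in> Oset \<Longrightarrow> backward \<sigma> \<alpha> Oset h = \<sigma> h"
  by (simp add: backward_def)

lemma beta_nO: "h \<notin> Oset \<Longrightarrow> backward \<sigma> \<alpha> Oset h = \<sigma> (\<alpha> h)"
  by (simp add: backward_def face_perm_def)

lemma iterO: "(\<forall>p<t. (\<sigma> ^^ p) h \<in> Oset) \<Longrightarrow> (backward \<sigma> \<alpha> Oset ^^ t) h = (\<sigma> ^^ t) h"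
proof (induction t)
  case 0 then show ?case by simp
next
  case (Suc t)
  then have "(backward \<sigma> \<alpha> Oset ^^ t) h = (\<sigma> ^^ t) h" by simp
  moreover have "(\<sigma> ^^ t) h \<in> Oset" using Suc.prems by simp
  ultimately show ?case by (simp add: beta_O)
qed

lemma seg_beta:
  assumes "x \<notin> Oset" "seg \<sigma> \<alpha> Oset g x"
  shows "\<exists>q>0. (backward \<sigma> \<alpha> Oset ^^ q) x = g"
proof -
  obtain q where q: "q > 0" "g = (\<sigma> ^^ q) (\<alpha> x)" "\<forall>p < q. (\<sigma> ^^ p) (\<alpha> x) \<in> Oset"
    using assms(2) unfolding seg_def by blast
  then obtain t where t: "q = Suc t" using gr0_implies_Suc by blast
  have "\<forall>p<t. (\<sigma> ^^ p) (\<sigma> (\<alpha> x)) \<in> Oset"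
  proof (intro allI impI)
    fix p assume "p < t"
    then have "Suc p < q" using t by simp
    then have "(\<sigma> ^^ Suc p) (\<alpha> x) \<in> Oset" using q(3) by blast
    then show "(\<sigma> ^^ p) (\<sigma> (\<alpha> x)) \<in> Oset" by (simp add: funpow_Suc_right del: funpow.simps)
  qed
  then have "(backward \<sigma> \<alpha> Oset ^^ t) (\<sigma> (\<alpha> x)) = (\<sigma> ^^ t) (\<sigma> (\<alpha> x))" by (rule iterO)
  then have "(backward \<sigma> \<alpha> Oset ^^ q) x = g"
    using q t assms(1) by (simp add: funpow_Suc_right beta_nO del: funpow.simps)
  then show ?thesis using q by blast
qed

lemma beta_seg:
  assumes "x \<notin> Oset" "\<alpha> x \<in> Oset" "s > 0"
    and "\<forall>t. 0 < t \<and> t < s \<longrightarrow> (backward \<sigma> \<alpha> Oset ^^ t) x \<in> Oset"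
  shows "seg \<sigma> \<alpha> Oset ((backward \<sigma> \<alpha> Oset ^^ s) x) x"
proof -
  obtain u where u: "s = Suc u" using assms(3) gr0_implies_Suc by blast
  have bx: "backward \<sigma> \<alpha> Oset x = \<sigma> (\<alpha> x)" using assms(1) by (simp add: beta_nO)
  have P: "t \<le> u \<Longrightarrow> (\<forall>p<t. (\<sigma> ^^ p) (\<sigma> (\<alpha> x)) \<in> Oset)" for t
  proof (induction t)
    case 0 then show ?case by simp
  next
    case (Suc t)
    then have IH: "\<forall>p<t. (\<sigma> ^^ p) (\<sigma> (\<alpha> x)) \<in> Oset" by simp
    have "(backward \<sigma> \<alpha> Oset ^^ t) (\<sigma> (\<alpha> x)) = (\<sigma> ^^ t) (\<sigma> (\<alpha> x))" using IH by (rule iterO)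
    then have "(backward \<sigma> \<alpha> Oset ^^ Suc t) x = (\<sigma> ^^ t) (\<sigma> (\<alpha> x))"
      using bx by (simp add: funpow_Suc_right del: funpow.simps)
    moreover have "0 < Suc t \<and> Suc t < s" using Suc.prems u by simp
    then have "(backward \<sigma> \<alpha> Oset ^^ Suc t) x \<in> Oset" using assms(4) by blast
    ultimately show ?case using IH less_Suc_eq by auto
  qed
  have Pu: "\<forall>p<u. (\<sigma> ^^ p) (\<sigma> (\<alpha> x)) \<in> Oset" using P[of u] by simp
  have "(backward \<sigma> \<alpha> Oset ^^ u) (\<sigma> (\<alpha> x)) = (\<sigma> ^^ u) (\<sigma> (\<alpha> x))" using Pu by (rule iterO)
  then have e: "(backward \<sigma> \<alpha> Oset ^^ s) x = (\<sigma> ^^ s) (\<alpha> x)"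
    using bx u by (simp add: funpow_Suc_right del: funpow.simps)
  have "\<forall>p<s. (\<sigma> ^^ p) (\<alpha> x) \<in> Oset"
  proof (intro allI impI)
    fix p assume p: "p < s"
    show "(\<sigma> ^^ p) (\<alpha> x) \<in> Oset"
    proof (cases p)
      case 0 then show ?thesis using assms(2) by simp
    next
      case (Suc p')
      then have "(\<sigma> ^^ p') (\<sigma> (\<alpha> x)) \<in> Oset" using Pu p u by simp
      then show ?thesis using Suc by (simp add: funpow_Suc_right del: funpow.simps)
    qed
  qed
  then show ?thesis unfolding seg_def using e assms(3) by blast
qed

lemma left_path_snoc:
  "left_path \<sigma> \<alpha> Iset Oset h0 (hs @ [x]) \<longleftrightarrow>
   left_path \<sigma> \<alpha> Iset Oset h0 hs \<and> x \<in> Iset \<and> seg \<sigma> \<alpha> Oset (if hs = [] then h0 else last hs) x"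
proof -
  have A: "(\<forall>j < length (hs @ [x]). Q j) \<longleftrightarrow> (\<forall>j < length hs. Q j) \<and> Q (length hs)" for Q
    by (auto simp: less_Suc_eq)
  have B: "j < length hs \<Longrightarrow>
    (let prev = (if j = 0 then h0 else (hs @ [x]) ! (j - 1)) in
         \<exists>q > 0. prev = (\<sigma> ^^ q) (\<alpha> ((hs @ [x]) ! j)) \<and>
                 (\<forall>p < q. (\<sigma> ^^ p) (\<alpha> ((hs @ [x]) ! j)) \<in> Oset)) \<longleftrightarrow>
    (let prev = (if j = 0 then h0 else hs ! (j - 1)) in
         \<exists>q > 0. prev = (\<sigma> ^^ q) (\<alpha> (hs ! j)) \<and>
                 (\<forall>p < q. (\<sigma> ^^ p) (\<alpha> (hs ! j)) \<in> Oset))" for j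
    by (cases j) (auto simp: nth_append)
  have C: "(let prev = (if length hs = 0 then h0 else (hs @ [x]) ! (length hs - 1)) in
         \<exists>q > 0. prev = (\<sigma> ^^ q) (\<alpha> ((hs @ [x]) ! length hs)) \<and>
                 (\<forall>p < q. (\<sigma> ^^ p) (\<alpha> ((hs @ [x]) ! length hs)) \<in> Oset)) \<longleftrightarrow>
     seg \<sigma> \<alpha> Oset (if hs = [] then h0 else last hs) x"
    by (simp add: seg_def nth_append last_conv_nth)
  show ?thesis
    unfolding left_path_def A using B C by auto
qed

lemma path_beta:
  assumes "Iset \<inter> Oset = {}"
  shows "left_path \<sigma> \<alpha> Iset Oset h0 hs \<Longrightarrow> hs \<noteq> [] \<Longrightarrow>
    \<exists>Q>0. (backward \<sigma> \<alpha> Oset ^^ Q) (last hs) = h0"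
proof (induction hs rule: rev_induct)
  case Nil then show ?case by simp
next
  case (snoc x hs)
  from snoc.prems(1) have lp: "left_path \<sigma> \<alpha> Iset Oset h0 hs" and xI: "x \<in> Iset"
    and sg: "seg \<sigma> \<alpha> Oset (if hs = [] then h0 else last hs) x"
    by (simp_all add: left_path_snoc)
  have "x \<notin> Oset" using xI assms by blast
  from seg_beta[OF this sg] obtain q where q: "q > 0"
    "(backward \<sigma> \<alpha> Oset ^^ q) x = (if hs = [] then h0 else last hs)" by blast
  show ?case
  proof (cases "hs = []")
    case True then show ?thesis using q by auto
  next
    case False
    then obtain Q where Q: "Q > 0" "(backward \<sigma> \<alpha> Oset ^^ Q) (last hs) = h0"
      using snoc.IH lp by blast
    have "(backward \<sigma> \<alpha> Oset ^^ (Q + q)) x = h0"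
      using Q q False by (simp add: funpow_add)
    then show ?thesis using Q by auto
  qed
qed

lemma iter_in:
  assumes "\<forall>h\<in>H. f h \<in> H" "h \<in> H" shows "(f ^^ n) h \<in> H"
  by (induction n) (use assms in auto)

lemma build:
  assumes disj: "Iset \<inter> Oset = {}" and HU: "Iset \<union> Oset = H"
    and aI: "\<forall>x\<in>Iset. \<alpha> x \<in> Oset"
    and bH: "\<forall>h\<in>H. backward \<sigma> \<alpha> Oset h \<in> H"
  shows "x \<in> Iset \<Longrightarrow> n > 0 \<Longrightarrow> (backward \<sigma> \<alpha> Oset ^^ n) x = h0 \<Longrightarrow>
    \<exists>hs. hs \<noteq> [] \<and> left_path \<sigma> \<alpha> Iset Oset h0 hs \<and> last hs = x"
proof (induction n arbitrary: x rule: less_induct)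
  case (less n)
  let ?b = "backward \<sigma> \<alpha> Oset"
  define s where "s = (LEAST s. s > 0 \<and> ((?b ^^ s) x \<in> Iset \<or> s = n))"
  have ex: "n > 0 \<and> ((?b ^^ n) x \<in> Iset \<or> n = n)" using less.prems by simp
  have s1: "s > 0 \<and> ((?b ^^ s) x \<in> Iset \<or> s = n)"
    unfolding s_def by (rule LeastI, rule ex)
  have sn: "s \<le> n" unfolding s_def by (rule Least_le, rule ex)
  have between: "\<forall>t. 0 < t \<and> t < s \<longrightarrow> (?b ^^ t) x \<in> Oset"
  proof (intro allI impI)
    fix t assume t: "0 < t \<and> t < s"
    have "\<not> (t > 0 \<and> ((?b ^^ t) x \<in> Iset \<or> t = n))"
      using t not_less_Least[of t] unfolding s_def by blast
    then have "(?b ^^ t) x \<notin> Iset" using t by blast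
    moreover have "(?b ^^ t) x \<in> H" using iter_in[OF bH] less.prems(1) HU by blast
    ultimately show "(?b ^^ t) x \<in> Oset" using HU by blast
  qed
  have xO: "x \<notin> Oset" using less.prems(1) disj by blast
  have sg: "seg \<sigma> \<alpha> Oset ((?b ^^ s) x) x"
    using beta_seg[OF xO] aI less.prems(1) s1 between by blast
  show ?case
  proof (cases "s = n")
    case True
    then have "seg \<sigma> \<alpha> Oset h0 x" using sg less.prems by simp
    then have "left_path \<sigma> \<alpha> Iset Oset h0 ([] @ [x])"
      using less.prems(1) by (simp only: left_path_snoc) (simp add: left_path_def)
    then show ?thesis by auto
  next
    case False
    then have sl: "s < n" and yI: "(?b ^^ s) x \<in> Iset" using sn s1 by auto
    have "(?b ^^ (n - s)) ((?b ^^ s) x) = h0"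
      using less.prems(3) sl by (simp add: funpow_add[symmetric, THEN fun_cong, simplified])
    moreover have "n - s < n" "n - s > 0" using sl s1 by auto
    ultimately obtain hs where hs: "hs \<noteq> []" "left_path \<sigma> \<alpha> Iset Oset h0 hs"
      "last hs = (?b ^^ s) x" using less.IH yI by blast
    have "left_path \<sigma> \<alpha> Iset Oset h0 (hs @ [x])"
      using hs sg less.prems(1) by (simp add: left_path_snoc)
    then show ?thesis by auto
  qed
qed

theorem mainTheorem9:
  fixes H :: "'a set" and \<sigma> \<alpha> :: "'a \<Rightarrow> 'a" and h0 :: 'a and Iset Oset :: "'a set"
  assumes "is_map H \<sigma> \<alpha> h0"
    and "is_orientation H \<alpha> Iset Oset"
  shows "left_connected \<sigma> \<alpha> Iset Oset h0 \<longleftrightarrow>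
         (\<forall>h \<in> H. \<exists>q::nat. q > 0 \<and> (backward \<sigma> \<alpha> Oset ^^ q) h = h0)"
proof -
  let ?b = "backward \<sigma> \<alpha> Oset"
  have sp: "\<sigma> permutes H" and ap: "\<alpha> permutes H" and inv: "\<forall>h\<in>H. \<alpha> (\<alpha> h) = h"
  proof -
    have m: "finite H \<and> h0 \<in> H \<and> \<sigma> permutes H \<and> \<alpha> permutes H \<and> (\<forall>h\<in>H. \<alpha> (\<alpha> h) = h \<and> \<alpha> h \<noteq> h)"
      using assms(1) unfolding is_map_def by (elim conjE) (intro conjI)
    then show "\<sigma> permutes H" "\<alpha> permutes H" "\<forall>h\<in>H. \<alpha> (\<alpha> h) = h" by auto
  qed
  have HU: "Iset \<union> Oset = H" and disj: "Iset \<inter> Oset = {}" and aIO: "\<alpha> ` Iset = Oset"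
    using assms(2) unfolding is_orientation_def by auto
  have sH: "\<forall>h\<in>H. \<sigma> h \<in> H" using sp by (simp add: permutes_in_image)
  have aH: "\<forall>h\<in>H. \<alpha> h \<in> H" using ap by (simp add: permutes_in_image)
  have bH: "\<forall>h\<in>H. ?b h \<in> H" using sH aH by (simp add: backward_def face_perm_def)
  have aI: "\<forall>x\<in>Iset. \<alpha> x \<in> Oset" using aIO by blast
  have aO: "\<forall>h\<in>Oset. \<alpha> h \<in> Iset"
  proof
    fix h assume "h \<in> Oset"
    then obtain i where "i \<in> Iset" "h = \<alpha> i" using aIO by blast
    then show "\<alpha> h \<in> Iset" using inv HU by auto
  qed
  show ?thesis
  proof
    assume L: "left_connected \<sigma> \<alpha> Iset Oset h0"
    have LI: "\<exists>Q>0. (?b ^^ Q) y = h0" if "y \<in> Iset" for y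
    proof -
      have "\<exists>hs. hs \<noteq> [] \<and> left_path \<sigma> \<alpha> Iset Oset h0 hs \<and> last hs = y"
        using L that unfolding left_connected_def by (rule bspec)
      then obtain hs where "hs \<noteq> []" "left_path \<sigma> \<alpha> Iset Oset h0 hs" "last hs = y"
        by (elim exE conjE)
      then show ?thesis using path_beta[OF disj] by blast
    qed
    show "\<forall>h \<in> H. \<exists>q::nat. q > 0 \<and> (?b ^^ q) h = h0"
    proof
      fix h assume hH: "h \<in> H"
      show "\<exists>q::nat. q > 0 \<and> (?b ^^ q) h = h0"
      proof (cases "h \<in> Iset")
        case True then show ?thesis using LI by blast
      next
        case False
        then have hO: "h \<in> Oset" using hH HU by blast
        have sigH: "(\<sigma> ^^ n) h \<in> H" for n using iter_in[OF sH hH] .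
        show ?thesis
        proof (cases "\<exists>p>0. (\<sigma> ^^ p) h \<in> Iset")
          case True
          define p where "p = (LEAST p. p > 0 \<and> (\<sigma> ^^ p) h \<in> Iset)"
          have p1: "p > 0 \<and> (\<sigma> ^^ p) h \<in> Iset"
            unfolding p_def using True by (rule LeastI_ex)
          have "\<forall>t<p. (\<sigma> ^^ t) h \<in> Oset"
          proof (intro allI impI)
            fix t assume t: "t < p"
            show "(\<sigma> ^^ t) h \<in> Oset"
            proof (cases "t = 0")
              case True then show ?thesis using hO by simp
            next
              case False
              have tl: "t < (LEAST p. 0 < p \<and> (\<sigma> ^^ p) h \<in> Iset)" using t unfolding p_def .
              have "\<not> (0 < t \<and> (\<sigma> ^^ t) h \<in> Iset)"
                using not_less_Least[OF tl] .
              then have "(\<sigma> ^^ t) h \<notin> Iset" using False by simp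
              then show ?thesis using sigH HU by blast
            qed
          qed
          then have e: "(?b ^^ p) h = (\<sigma> ^^ p) h" by (rule iterO)
          obtain Q where Q: "Q > 0" "(?b ^^ Q) ((\<sigma> ^^ p) h) = h0" using LI p1 by blast
          have "(?b ^^ (Q + p)) h = h0" using Q e by (simp add: funpow_add)
          then show ?thesis using Q by auto
        next
          case False
          have allO: "\<forall>t. (\<sigma> ^^ t) h \<in> Oset"
          proof
            fix t show "(\<sigma> ^^ t) h \<in> Oset"
            proof (cases "t = 0")
              case True then show ?thesis using hO by simp
            next
              case f: False
              then have "0 < t" by simp
              then have "(\<sigma> ^^ t) h \<notin> Iset" using False by blast
              then show ?thesis using sigH HU by blast
            qed
          qed
          have ahI: "\<alpha> h \<in> Iset" using aO hO by blast
          have "\<exists>hs. hs \<noteq> [] \<and> left_path \<sigma> \<alpha> Iset Oset h0 hs \<and> last hs = \<alpha> h"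
            using L ahI unfolding left_connected_def by (rule bspec)
          then obtain hs where hs: "hs \<noteq> []" "left_path \<sigma> \<alpha> Iset Oset h0 hs" "last hs = \<alpha> h"
            by (elim exE conjE)
          define j where "j = length hs - 1"
          have j1: "j < length hs" using hs(1) unfolding j_def by simp
          have "last hs = hs ! j" unfolding j_def using hs(1) by (rule last_conv_nth)
          then have j: "j < length hs" "hs ! j = \<alpha> h" using j1 hs(3) by simp_all
          have aah: "\<alpha> (\<alpha> h) = h" using inv hH by blast
          have lps: "set hs \<subseteq> Iset" using hs(2) unfolding left_path_def by (rule conjunct1)
          have lpa: "\<forall>j < length hs.
            (let prev = (if j = 0 then h0 else hs ! (j - 1)) in
             \<exists>q > 0. prev = (\<sigma> ^^ q) (\<alpha> (hs ! j)) \<and>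
                 (\<forall>p < q. (\<sigma> ^^ p) (\<alpha> (hs ! j)) \<in> Oset))"
            using hs(2) unfolding left_path_def by (rule conjunct2)
          have "\<exists>q>0. (if j = 0 then h0 else hs ! (j - 1)) = (\<sigma> ^^ q) (\<alpha> (hs ! j)) \<and>
                 (\<forall>p < q. (\<sigma> ^^ p) (\<alpha> (hs ! j)) \<in> Oset)"
            using lpa[rule_format, OF j(1)] unfolding Let_def .
          then obtain q where q0: "q > 0" "(if j = 0 then h0 else hs ! (j - 1)) = (\<sigma> ^^ q) (\<alpha> (hs ! j))"
            by blast
          have "(\<sigma> ^^ q) (\<alpha> (hs ! j)) = (\<sigma> ^^ q) h" by (simp only: j(2) aah)
          then have q: "q > 0" "(if j = 0 then h0 else hs ! (j - 1)) = (\<sigma> ^^ q) h"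
            using q0 by simp_all
          have "j = 0"
          proof (rule ccontr)
            assume "j \<noteq> 0"
            have "j - 1 < length hs" using j(1) by simp
            then have "hs ! (j - 1) \<in> set hs" by (rule nth_mem)
            then have "hs ! (j - 1) \<in> Iset" using lps by (rule subsetD[rotated])
            moreover have "hs ! (j - 1) = (\<sigma> ^^ q) h" using q(2) \<open>j \<noteq> 0\<close> by simp
            ultimately have "(\<sigma> ^^ q) h \<in> Iset" by simp
            moreover have "(\<sigma> ^^ q) h \<in> Oset" using allO by (rule spec)
            ultimately have "(\<sigma> ^^ q) h \<in> Iset \<inter> Oset" by (rule IntI)
            then show False using disj by simp
          qed
          then have e1: "(\<sigma> ^^ q) h = h0" using q(2) by simp
          have allq: "\<forall>p<q. (\<sigma> ^^ p) h \<in> Oset" using allO by simp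
          have "(?b ^^ q) h = (\<sigma> ^^ q) h" using allq by (rule iterO)
          then have "(?b ^^ q) h = h0" using e1 by simp
          then show ?thesis using q(1) by blast
        qed
      qed
    qed
  next
    assume R: "\<forall>h \<in> H. \<exists>q::nat. q > 0 \<and> (?b ^^ q) h = h0"
    show "left_connected \<sigma> \<alpha> Iset Oset h0"
      unfolding left_connected_def
    proof
      fix x assume xI: "x \<in> Iset"
      then obtain n where "n > 0" "(?b ^^ n) x = h0" using R HU by blast
      then show "\<exists>hs. hs \<noteq> [] \<and> left_path \<sigma> \<alpha> Iset Oset h0 hs \<and> last hs = x"
        using build[OF disj HU aI bH xI] by blast
    qed
  qed
qed

end
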